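(* Let $t$ be a positive integer and let $G$ be a graph on $4t-1$ vertices with $\alpha(G)=2$ and $\mathrm{cm}(G)\le t-1$. For any disjoint subsets $A,B\subseteq V(G)$ with $|A|\le |B|=t-1$, the bipartite subgraph $H$ of $G$ formed by the edges of $G$ between $A$ and $B$ contains a matching of size $|A|$.
   Context: All graphs are finite and simple. $\alpha(G)$ is the independence number. A matching $M$ in $G$ is connected if for every two edges of $M$ there is an edge of $G$ joining an endpoint of one to an endpoint of the other; $\mathrm{cm}(G)$ is the maximum size of a connected matching in $G$. *)

theory Defs
  imports Main
begin

definition simple_graph :: "'a set \<Rightarrow> 'a set set \<Rightarrow> bool" where
  "simple_graph V E \<longleftrightarrow> finite V \<and> (\<forall>e\<in>E. e \<subseteq> V \<and> card e = 2)"

definition indep_set :: "'a set \<Rightarrow> 'a set set \<Rightarrow> 'a set \<Rightarrow> bool" where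
  "indep_set V E S \<longleftrightarrow> S \<subseteq> V \<and> (\<forall>u\<in>S. \<forall>v\<in>S. {u, v} \<notin> E)"

definition indep_number :: "'a set \<Rightarrow> 'a set set \<Rightarrow> nat" where
  "indep_number V E = Max (card ` {S. indep_set V E S})"

definition matching :: "'a set set \<Rightarrow> 'a set set \<Rightarrow> bool" where
  "matching E M \<longleftrightarrow> M \<subseteq> E \<and> (\<forall>e1\<in>M. \<forall>e2\<in>M. e1 \<noteq> e2 \<longrightarrow> e1 \<inter> e2 = {})"

definition connected_matching :: "'a set set \<Rightarrow> 'a set set \<Rightarrow> bool" where
  "connected_matching E M \<longleftrightarrow> matching E M \<and>
     (\<forall>e1\<in>M. \<forall>e2\<in>M. e1 \<noteq> e2 \<longrightarrow> (\<exists>u\<in>e1. \<exists>v\<in>e2. {u, v} \<in> E))"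

definition cm :: "'a set set \<Rightarrow> nat" where
  "cm E = Max (card ` {M. connected_matching E M})"

definition between_edges :: "'a set set \<Rightarrow> 'a set \<Rightarrow> 'a set \<Rightarrow> 'a set set" where
  "between_edges E A B = {e \<in> E. \<exists>a\<in>A. \<exists>b\<in>B. e = {a, b}}"

end

theory Submission imports Defs begin


lemma hall:
  fixes N :: "'a \<Rightarrow> 'b set"
  assumes "finite S" "\<forall>s\<in>S. finite (N s)" "\<forall>T\<subseteq>S. card T \<le> card (\<Union>(N ` T))"
  shows "\<exists>f. inj_on f S \<and> (\<forall>s\<in>S. f s \<in> N s)"
  using assms
proof (induction "card S" arbitrary: S N rule: less_induct)
  case less
  show ?case
  proof (cases "S = {}")
    case True then show ?thesis by auto
  next
    case ne: False
    show ?thesis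
    proof (cases "\<exists>T. T \<subseteq> S \<and> T \<noteq> {} \<and> T \<noteq> S \<and> card (\<Union>(N ` T)) \<le> card T")
      case False
      then have strict: "\<And>T. T \<subseteq> S \<Longrightarrow> T \<noteq> {} \<Longrightarrow> T \<noteq> S \<Longrightarrow> card T < card (\<Union>(N ` T))"
        by (meson not_less)
      obtain x where x: "x \<in> S" using ne by blast
      have "card {x} \<le> card (N x)" using less.prems(3) x by auto
      then have "N x \<noteq> {}" by auto
      then obtain y where y: "y \<in> N x" by blast
      define S' where "S' = S - {x}"
      define N' where "N' = (\<lambda>s. N s - {y})"
      have "card S' < card S" unfolding S'_def using x less.prems(1) by (intro card_Diff1_less)
      moreover have "finite S'" unfolding S'_def using less.prems(1) by simp
      moreover have "\<forall>s\<in>S'. finite (N' s)" unfolding S'_def N'_def using less.prems(2) by auto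
      moreover have "\<forall>T\<subseteq>S'. card T \<le> card (\<Union>(N' ` T))"
      proof (intro allI impI)
        fix T assume T: "T \<subseteq> S'"
        show "card T \<le> card (\<Union>(N' ` T))"
        proof (cases "T = {}")
          case True then show ?thesis by simp
        next
          case False
          have "T \<noteq> S" using T x unfolding S'_def by auto
          moreover have TS: "T \<subseteq> S" using T unfolding S'_def by auto
          ultimately have lt: "card T < card (\<Union>(N ` T))" using strict False by blast
          have eq: "\<Union>(N' ` T) = \<Union>(N ` T) - {y}" unfolding N'_def by auto
          have "card (\<Union>(N ` T)) - 1 \<le> card (\<Union>(N ` T) - {y})"
            by (cases "y \<in> \<Union>(N ` T)") (auto simp: card_Diff_singleton)
          then show ?thesis using lt eq by simp
        qed
      qed
      ultimately obtain f where f: "inj_on f S'" "\<forall>s\<in>S'. f s \<in> N' s"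
        using less.hyps[of S' N'] by auto
      define g where "g = f(x := y)"
      have "inj_on g S"
      proof -
        have "S = insert x S'" unfolding S'_def using x by auto
        moreover have "inj_on g S'" using f(1) unfolding g_def S'_def by (simp add: inj_on_def)
        moreover have "g x \<notin> g ` (S' - {x})" using f(2) unfolding g_def N'_def S'_def by auto
        ultimately show ?thesis by (metis inj_on_insert S'_def)
      qed
      moreover have "\<forall>s\<in>S. g s \<in> N s" using f(2) y unfolding g_def N'_def S'_def by auto
      ultimately show ?thesis by blast
    next
      case True
      then obtain T where T: "T \<subseteq> S" "T \<noteq> {}" "T \<noteq> S" "card (\<Union>(N ` T)) \<le> card T" by blast
      have finT: "finite T" using T(1) less.prems(1) finite_subset by blast
      have finNT: "finite (\<Union>(N ` T))" using finT T(1) less.prems(2) by auto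
      have "card T < card S" using T less.prems(1) by (simp add: psubset_card_mono psubsetI)
      then obtain f1 where f1: "inj_on f1 T" "\<forall>s\<in>T. f1 s \<in> N s"
        using less.hyps[of T N] finT T(1) less.prems(2,3) by auto
      define S2 where "S2 = S - T"
      define N2 where "N2 = (\<lambda>s. N s - \<Union>(N ` T))"
      have "card S2 < card S"
      proof -
        have "card (S - T) = card S - card T" using T(1) finT by (simp add: card_Diff_subset)
        moreover have "card T > 0" using T(2) finT by auto
        moreover have "card T \<le> card S" using T(1) less.prems(1) by (simp add: card_mono)
        ultimately have "card (S - T) < card S" by linarith
        then show ?thesis by (simp add: S2_def)
      qed
      moreover have "finite S2" unfolding S2_def using less.prems(1) by simp
      moreover have "\<forall>s\<in>S2. finite (N2 s)" unfolding S2_def N2_def using less.prems(2) by auto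
      moreover have "\<forall>U\<subseteq>S2. card U \<le> card (\<Union>(N2 ` U))"
      proof (intro allI impI)
        fix U assume U: "U \<subseteq> S2"
        have finU: "finite U" using U \<open>finite S2\<close> finite_subset by blast
        have eq: "\<Union>(N2 ` U) = \<Union>(N ` (U \<union> T)) - \<Union>(N ` T)" unfolding N2_def by auto
        have "U \<union> T \<subseteq> S" using U T(1) unfolding S2_def by auto
        then have h: "card (U \<union> T) \<le> card (\<Union>(N ` (U \<union> T)))" using less.prems(3) by blast
        have disj: "U \<inter> T = {}" using U unfolding S2_def by auto
        have cu: "card (U \<union> T) = card U + card T" using finU finT disj by (simp add: card_Un_disjoint)
        have "card (\<Union>(N ` (U \<union> T))) - card (\<Union>(N ` T)) \<le> card (\<Union>(N ` (U \<union> T)) - \<Union>(N ` T))"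
          by (rule diff_card_le_card_Diff) (use finNT in auto)
        then have "card (\<Union>(N ` (U \<union> T))) - card (\<Union>(N ` T)) \<le> card (\<Union>(N2 ` U))" using eq by simp
        then show "card U \<le> card (\<Union>(N2 ` U))" using h cu T(4) by linarith
      qed
      ultimately obtain f2 where f2: "inj_on f2 S2" "\<forall>s\<in>S2. f2 s \<in> N2 s"
        using less.hyps[of S2 N2] by auto
      define g where "g = (\<lambda>s. if s \<in> T then f1 s else f2 s)"
      have "inj_on g S"
        unfolding inj_on_def
      proof (intro ballI impI)
        fix a b assume a: "a \<in> S" and b: "b \<in> S" and eq: "g a = g b"
        show "a = b"
        proof (cases "a \<in> T"; cases "b \<in> T")
          assume "a \<in> T" "b \<in> T" then show ?thesis using eq f1(1) unfolding g_def inj_on_def by auto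
        next
          assume "a \<notin> T" "b \<notin> T" then show ?thesis using eq f2(1) a b unfolding g_def inj_on_def S2_def by auto
        next
          assume "a \<in> T" "b \<notin> T"
          then have "g a \<in> \<Union>(N ` T)" "g b \<notin> \<Union>(N ` T)" using f1(2) f2(2) b unfolding g_def N2_def S2_def by auto
          then show ?thesis using eq by simp
        next
          assume "a \<notin> T" "b \<in> T"
          then have "g b \<in> \<Union>(N ` T)" "g a \<notin> \<Union>(N ` T)" using f1(2) f2(2) a unfolding g_def N2_def S2_def by auto
          then show ?thesis using eq by simp
        qed
      qed
      moreover have "\<forall>s\<in>S. g s \<in> N s" using f1(2) f2(2) unfolding g_def N2_def S2_def by auto
      ultimately show ?thesis by blast
    qed
  qed
qed


lemma pair_image:
  assumes "inj_on f S" "f ` S \<inter> S = {}"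
  shows "inj_on (\<lambda>s. {s, f s}) S"
    and "\<And>s1 s2. s1 \<in> S \<Longrightarrow> s2 \<in> S \<Longrightarrow> s1 \<noteq> s2 \<Longrightarrow> {s1, f s1} \<inter> {s2, f s2} = {}"
proof -
  show "inj_on (\<lambda>s. {s, f s}) S"
  proof (rule inj_onI)
    fix x y assume x: "x \<in> S" and y: "y \<in> S" and eq: "{x, f x} = {y, f y}"
    then have "x \<in> {y, f y}" by blast
    moreover have "f y \<notin> S" using assms(2) y by blast
    ultimately show "x = y" using x by auto
  qed
next
  fix s1 s2 assume a: "s1 \<in> S" "s2 \<in> S" "s1 \<noteq> s2"
  have "f s1 \<notin> S" "f s2 \<notin> S" using assms(2) a by blast+
  moreover have "f s1 \<noteq> f s2" using assms(1) a by (meson inj_onD)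
  ultimately show "{s1, f s1} \<inter> {s2, f s2} = {}" using a by auto
qed

locale gr =
  fixes V :: "'a set" and E :: "'a set set" and t :: nat
  assumes fin: "finite V"
    and edge: "\<And>e. e \<in> E \<Longrightarrow> e \<subseteq> V \<and> card e = 2"
    and t1: "t \<ge> 1"
    and cardV: "card V = 4 * t - 1"
    and tri: "\<And>x y z. x \<in> V \<Longrightarrow> y \<in> V \<Longrightarrow> z \<in> V \<Longrightarrow> x \<noteq> y \<Longrightarrow> x \<noteq> z \<Longrightarrow> y \<noteq> z
              \<Longrightarrow> {x, y} \<in> E \<or> {x, z} \<in> E \<or> {y, z} \<in> E"
    and cmb: "\<And>M. connected_matching E M \<Longrightarrow> card M \<le> t - 1"
begin

lemma adjD: assumes "{u, v} \<in> E" shows "u \<noteq> v" "u \<in> V" "v \<in> V"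
  using edge[OF assms] by (auto simp: card_insert_if split: if_splits)

lemma cm_lemma:
  assumes S: "S \<subseteq> V" and inj: "inj_on f S" and disj: "f ` S \<inter> S = {}"
    and ed: "\<And>s. s \<in> S \<Longrightarrow> {s, f s} \<in> E"
    and con: "\<And>s1 s2. s1 \<in> S \<Longrightarrow> s2 \<in> S \<Longrightarrow> s1 \<noteq> s2 \<Longrightarrow> \<exists>u\<in>{s1, f s1}. \<exists>v\<in>{s2, f s2}. {u, v} \<in> E"
  shows "card S \<le> t - 1"
proof -
  define M where "M = (\<lambda>s. {s, f s}) ` S"
  note pi = pair_image[OF inj disj]
  have "connected_matching E M"
    unfolding connected_matching_def matching_def
  proof (intro conjI ballI impI)
    show "M \<subseteq> E" unfolding M_def using ed by auto
  next
    fix e1 e2 assume "e1 \<in> M" "e2 \<in> M" "e1 \<noteq> e2"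
    then obtain s1 s2 where "s1 \<in> S" "s2 \<in> S" "e1 = {s1, f s1}" "e2 = {s2, f s2}" "s1 \<noteq> s2"
      unfolding M_def by auto
    then show "e1 \<inter> e2 = {}" using pi(2) by auto
  next
    fix e1 e2 assume "e1 \<in> M" "e2 \<in> M" "e1 \<noteq> e2"
    then obtain s1 s2 where "s1 \<in> S" "s2 \<in> S" "e1 = {s1, f s1}" "e2 = {s2, f s2}" "s1 \<noteq> s2"
      unfolding M_def by auto
    then show "\<exists>u\<in>e1. \<exists>v\<in>e2. {u, v} \<in> E" using con by auto
  qed
  then have "card M \<le> t - 1" by (rule cmb)
  moreover have "card M = card S" unfolding M_def using pi(1) by (rule card_image)
  ultimately show ?thesis by simp
qed

definition NN :: "'a \<Rightarrow> 'a set" where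
  "NN v = {u \<in> V. u \<noteq> v \<and> {u, v} \<notin> E}"

lemma NN_fin: "finite (NN v)" unfolding NN_def using fin by auto

lemma NN_clique:
  assumes "v \<in> V" "u \<in> NN v" "w \<in> NN v" "u \<noteq> w"
  shows "{u, w} \<in> E"
proof -
  have "u \<in> V" "w \<in> V" "u \<noteq> v" "w \<noteq> v" "{u, v} \<notin> E" "{w, v} \<notin> E" using assms(2,3) unfolding NN_def by auto
  then show ?thesis using tri[of v u w] assms(1,4) by (auto simp: insert_commute)
qed

lemma NN_le_2t: assumes v: "v \<in> V" shows "card (NN v) \<le> 2 * t - 1"
proof (rule ccontr)
  assume "\<not> ?thesis"
  then have "2 * t \<le> card (NN v)" by simp
  then obtain K where K: "K \<subseteq> NN v" "card K = 2 * t" "finite K" by (rule obtain_subset_with_card_n)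
  then obtain S where S: "S \<subseteq> K" "card S = t" "finite S" by (metis obtain_subset_with_card_n le_add2 mult_2)
  have "card (K - S) = t" using K S by (simp add: card_Diff_subset)
  then obtain f where f: "bij_betw f S (K - S)" using finite_same_card_bij[of S "K - S"] S K by auto
  have SV: "S \<subseteq> V" using S K unfolding NN_def by auto
  have fS: "\<And>s. s \<in> S \<Longrightarrow> f s \<in> K - S" using f by (auto simp: bij_betw_def)
  have "card S \<le> t - 1"
  proof (rule cm_lemma[OF SV])
    show "inj_on f S" using f by (simp add: bij_betw_def)
    show "f ` S \<inter> S = {}" using fS by auto
    show "{s, f s} \<in> E" if "s \<in> S" for s
    proof -
      have "f s \<in> K" "f s \<notin> S" using fS[OF that] by auto
      then have "f s \<noteq> s" "f s \<in> NN v" "s \<in> NN v" using that S K by auto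
      then show ?thesis using NN_clique[OF v, of s "f s"] by auto
    qed
    show "\<exists>u\<in>{s1, f s1}. \<exists>v\<in>{s2, f s2}. {u, v} \<in> E" if "s1 \<in> S" "s2 \<in> S" "s1 \<noteq> s2" for s1 s2
      using NN_clique[OF v, of s1 s2] that S K by auto
  qed
  then show False using S t1 by simp
qed

lemma NN_le_t: assumes v: "v \<in> V" shows "card (NN v) \<le> t - 1"
proof (rule ccontr)
  assume "\<not> ?thesis"
  then have "t \<le> card (NN v)" by simp
  then obtain S where S: "S \<subseteq> NN v" "card S = t" "finite S" by (rule obtain_subset_with_card_n)
  have SV: "S \<subseteq> V" using S unfolding NN_def by auto
  define C where "C = (\<lambda>s. (V - S) - NN s)"
  have cardVS: "card (V - S) = 3 * t - 1" using S SV cardV t1 by (simp add: card_Diff_subset)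
  have candbig: "t \<le> card (C s)" if s: "s \<in> S" for s
  proof -
    have "card (V - S) - card (NN s) \<le> card (C s)" unfolding C_def by (rule diff_card_le_card_Diff[OF NN_fin])
    moreover have "card (NN s) \<le> 2 * t - 1" using NN_le_2t s SV by auto
    ultimately show ?thesis using cardVS t1 by linarith
  qed
  have finC: "finite (C s)" for s unfolding C_def using fin by auto
  obtain f where f: "inj_on f S" "\<forall>s\<in>S. f s \<in> C s"
  proof -
    have "\<forall>T\<subseteq>S. card T \<le> card (\<Union>(C ` T))"
    proof (intro allI impI)
      fix T assume T: "T \<subseteq> S"
      show "card T \<le> card (\<Union>(C ` T))"
      proof (cases "T = {}")
        case True then show ?thesis by simp
      next
        case False
        then obtain s where s: "s \<in> T" by blast
        have "card T \<le> card S" using T S(3) by (rule card_mono[rotated])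
        also have "\<dots> \<le> card (C s)" using candbig s T S by auto
        also have "\<dots> \<le> card (\<Union>(C ` T))"
          by (rule card_mono) (use finC finite_subset[OF T S(3)] s in auto)
        finally show ?thesis .
      qed
    qed
    then show ?thesis using hall[of S C] S finC that by blast
  qed
  have "card S \<le> t - 1"
  proof (rule cm_lemma[OF SV f(1)])
    show "f ` S \<inter> S = {}" using f(2) unfolding C_def by auto
    show "{s, f s} \<in> E" if "s \<in> S" for s
    proof -
      have "f s \<in> V" "f s \<notin> S" "f s \<notin> NN s" using f(2) that unfolding C_def by auto
      then have "{f s, s} \<in> E" using that unfolding NN_def by auto
      then show ?thesis by (simp add: insert_commute)
    qed
    show "\<exists>u\<in>{s1, f s1}. \<exists>v\<in>{s2, f s2}. {u, v} \<in> E" if "s1 \<in> S" "s2 \<in> S" "s1 \<noteq> s2" for s1 s2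
      using NN_clique[OF v, of s1 s2] that S by auto
  qed
  then show False using S t1 by simp
qed

end

context gr begin

lemma scheme:
  assumes PV: "P \<subseteq> V" and QV: "Q \<subseteq> V" and PQ: "P \<inter> Q = {}" and Pne: "P \<noteq> {}" and Qne: "Q \<noteq> {}"
    and noe: "\<And>a b. a \<in> P \<Longrightarrow> b \<in> Q \<Longrightarrow> {a, b} \<notin> E"
    and sz: "card P + card Q = t"
    and Zbig: "t + card Q \<le> card {r \<in> V - (P \<union> Q). \<forall>a\<in>P. {r, a} \<in> E} + card P + 1"
  shows False
proof -
  have finP: "finite P" and finQ: "finite Q" using PV QV fin finite_subset by blast+
  define R where "R = V - (P \<union> Q)"
  define Z where "Z = {r \<in> R. \<forall>a\<in>P. {r, a} \<in> E}"
  have finR: "finite R" and finZ: "finite Z" unfolding R_def Z_def using fin by auto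
  have cardR: "card R = 3 * t - 1"
  proof -
    have "card (P \<union> Q) = t" using sz finP finQ PQ by (simp add: card_Un_disjoint)
    then show ?thesis unfolding R_def using PV QV cardV fin t1 by (simp add: card_Diff_subset finite_subset)
  qed
  have QNN: "Q \<subseteq> NN a" if "a \<in> P" for a
    using noe[OF that] QV PQ that unfolding NN_def by (auto simp: insert_commute)
  have PNN: "P \<subseteq> NN b" if "b \<in> Q" for b
    using noe[OF _ that] PV PQ that unfolding NN_def by auto
  have Pcl: "{a1, a2} \<in> E" if "a1 \<in> P" "a2 \<in> P" "a1 \<noteq> a2" for a1 a2
  proof -
    obtain b where b: "b \<in> Q" using Qne by blast
    then show ?thesis using NN_clique[of b a1 a2] PNN[OF b] that QV by auto
  qed
  have Qcl: "{b1, b2} \<in> E" if "b1 \<in> Q" "b2 \<in> Q" "b1 \<noteq> b2" for b1 b2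
  proof -
    obtain a where a: "a \<in> P" using Pne by blast
    then show ?thesis using NN_clique[of a b1 b2] QNN[OF a] that PV by auto
  qed
  define C where "C = (\<lambda>s. if s \<in> P then R - NN s else Z - NN s)"
  have finC: "finite (C s)" for s unfolding C_def using finR finZ by auto
  have candP: "t \<le> card (C a)" if a: "a \<in> P" for a
  proof -
    have eq: "C a = R - (NN a - Q)" unfolding C_def R_def using a by auto
    have "card R - card (NN a - Q) \<le> card (R - (NN a - Q))"
      by (rule diff_card_le_card_Diff) (use NN_fin in auto)
    moreover have "card (NN a - Q) = card (NN a) - card Q" using QNN[OF a] finQ by (simp add: card_Diff_subset)
    moreover have "card (NN a) \<le> t - 1" using NN_le_t a PV by auto
    ultimately show ?thesis unfolding eq using cardR t1 by linarith
  qed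
  have candQ: "card Q \<le> card (C b)" if b: "b \<in> Q" for b
  proof -
    have eq: "C b = Z - (NN b - P)" unfolding C_def Z_def R_def using b PQ by auto
    have "card Z - card (NN b - P) \<le> card (Z - (NN b - P))"
      by (rule diff_card_le_card_Diff) (use NN_fin in auto)
    moreover have "card (NN b - P) = card (NN b) - card P" using PNN[OF b] finP by (simp add: card_Diff_subset)
    moreover have "card (NN b) \<le> t - 1" using NN_le_t b QV by auto
    moreover have "card (NN b) \<ge> card P" using PNN[OF b] NN_fin by (simp add: card_mono)
    moreover have "card {r \<in> V - (P \<union> Q). \<forall>a\<in>P. {r, a} \<in> E} = card Z" unfolding Z_def R_def by simp
    ultimately show ?thesis unfolding eq using Zbig sz by linarith
  qed
  define S where "S = P \<union> Q"
  have finS: "finite S" unfolding S_def using finP finQ by auto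
  have cardS: "card S = t" unfolding S_def using sz finP finQ PQ by (simp add: card_Un_disjoint)
  obtain f where f: "inj_on f S" "\<forall>s\<in>S. f s \<in> C s"
  proof -
    have "\<forall>T\<subseteq>S. card T \<le> card (\<Union>(C ` T))"
    proof (intro allI impI)
      fix T assume T: "T \<subseteq> S"
      have finT: "finite T" using T finS finite_subset by blast
      have finU: "finite (\<Union>(C ` T))" using finT finC by auto
      show "card T \<le> card (\<Union>(C ` T))"
      proof (cases "T \<inter> P = {}")
        case False
        then obtain a where a: "a \<in> T" "a \<in> P" by blast
        have "card T \<le> card S" using T finS by (rule card_mono[rotated])
        also have "\<dots> \<le> card (C a)" using candP a cardS by auto
        also have "\<dots> \<le> card (\<Union>(C ` T))" by (rule card_mono) (use finU a in auto)
        finally show ?thesis .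
      next
        case True
        then have TQ: "T \<subseteq> Q" using T unfolding S_def by auto
        show ?thesis
        proof (cases "T = {}")
          case True then show ?thesis by simp
        next
          case False
          then obtain b where b: "b \<in> T" by blast
          have "card T \<le> card Q" using TQ finQ by (rule card_mono[rotated])
          also have "\<dots> \<le> card (C b)" using candQ b TQ by auto
          also have "\<dots> \<le> card (\<Union>(C ` T))" by (rule card_mono) (use finU b in auto)
          finally show ?thesis .
        qed
      qed
    qed
    then show ?thesis using hall[of S C] finS finC that by blast
  qed
  have fR: "f s \<in> R" "f s \<notin> NN s" if "s \<in> S" for s
    using f(2) that unfolding C_def Z_def by (auto split: if_splits)
  have SV: "S \<subseteq> V" unfolding S_def using PV QV by auto
  have "card S \<le> t - 1"
  proof (rule cm_lemma[OF SV f(1)])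
    show "f ` S \<inter> S = {}" using fR unfolding R_def S_def by auto
    show ed: "{s, f s} \<in> E" if "s \<in> S" for s
    proof -
      have "f s \<in> V" "f s \<noteq> s" using fR[OF that] that unfolding R_def S_def by auto
      then have "{f s, s} \<in> E" using fR(2)[OF that] unfolding NN_def by auto
      then show ?thesis by (simp add: insert_commute)
    qed
    show "\<exists>u\<in>{s1, f s1}. \<exists>v\<in>{s2, f s2}. {u, v} \<in> E" if s: "s1 \<in> S" "s2 \<in> S" "s1 \<noteq> s2" for s1 s2
    proof -
      consider "s1 \<in> P" "s2 \<in> P" | "s1 \<in> Q" "s2 \<in> Q" | "s1 \<in> P" "s2 \<in> Q" | "s1 \<in> Q" "s2 \<in> P"
        using s unfolding S_def by auto
      then show ?thesis
      proof cases
        case 1 then show ?thesis using Pcl s by blast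
      next
        case 2 then show ?thesis using Qcl s by blast
      next
        case 3
        then have "s2 \<notin> P" using PQ by auto
        then have "f s2 \<in> Z" using f(2) s(2) unfolding C_def by auto
        then have "{f s2, s1} \<in> E" using 3 unfolding Z_def by auto
        then show ?thesis by (auto simp: insert_commute)
      next
        case 4
        then have "s1 \<notin> P" using PQ by auto
        then have "f s1 \<in> Z" using f(2) s(1) unfolding C_def by auto
        then have "{f s1, s2} \<in> E" using 4 unfolding Z_def by auto
        then show ?thesis by auto
      qed
    qed
  qed
  then show False using cardS t1 by simp
qed

lemma two_cliques:
  assumes PV: "P \<subseteq> V" and QV: "Q \<subseteq> V" and PQ: "P \<inter> Q = {}" and Pne: "P \<noteq> {}"
    and noe: "\<And>a b. a \<in> P \<Longrightarrow> b \<in> Q \<Longrightarrow> {a, b} \<notin> E"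
    and Plt: "card P < t" and sz: "t \<le> card P + card Q"
  shows False
proof -
  have finP: "finite P" and finQ: "finite Q" using PV QV fin finite_subset by blast+
  have "t - card P \<le> card Q" using sz by simp
  then obtain Q' where Q': "Q' \<subseteq> Q" "card Q' = t - card P" "finite Q'"
    by (rule obtain_subset_with_card_n)
  have Q'ne: "Q' \<noteq> {}" using Q' Plt by auto
  have Q'V: "Q' \<subseteq> V" using Q' QV by auto
  have PQ': "P \<inter> Q' = {}" using PQ Q' by auto
  have noe': "\<And>a b. a \<in> P \<Longrightarrow> b \<in> Q' \<Longrightarrow> {a, b} \<notin> E" using noe Q' by auto
  have sz': "card P + card Q' = t" using Q' Plt by simp
  define R where "R = V - (P \<union> Q')"
  define ZA where "ZA = {r \<in> R. \<forall>a\<in>P. {r, a} \<in> E}"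
  define ZB where "ZB = {r \<in> R. \<forall>b\<in>Q'. {r, b} \<in> E}"
  have cardR: "card R = 3 * t - 1"
  proof -
    have "card (P \<union> Q') = t" using sz' finP Q' PQ' by (simp add: card_Un_disjoint)
    then show ?thesis unfolding R_def using PV Q'V cardV fin t1 by (simp add: card_Diff_subset finite_subset)
  qed
  have cov: "R = ZA \<union> ZB"
  proof
    show "R \<subseteq> ZA \<union> ZB"
    proof
      fix r assume r: "r \<in> R"
      show "r \<in> ZA \<union> ZB"
      proof (cases "r \<in> ZA")
        case True then show ?thesis by simp
      next
        case False
        then obtain a where a: "a \<in> P" "{r, a} \<notin> E" using r unfolding ZA_def by auto
        have "\<forall>b\<in>Q'. {r, b} \<in> E"
        proof
          fix b assume b: "b \<in> Q'"
          have "r \<noteq> a" "r \<noteq> b" "a \<noteq> b" "r \<in> V" using r a b PQ' unfolding R_def by auto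
          then show "{r, b} \<in> E" using tri[of r a b] a b PV Q'V noe'[OF a(1) b] by auto
        qed
        then show ?thesis using r unfolding ZB_def by auto
      qed
    qed
  qed (auto simp: ZA_def ZB_def)
  have finR: "finite R" unfolding R_def using fin by auto
  have "card R \<le> card ZA + card ZB" using cov finR by (metis card_Un_le)
  moreover have "\<not> t + card Q' \<le> card ZA + card P + 1"
    using scheme[OF PV Q'V PQ' Pne Q'ne noe' sz'] unfolding ZA_def R_def by blast
  moreover have "\<not> t + card P \<le> card ZB + card Q' + 1"
  proof
    assume h: "t + card P \<le> card ZB + card Q' + 1"
    have eq: "ZB = {r \<in> V - (Q' \<union> P). \<forall>a\<in>Q'. {r, a} \<in> E}" unfolding ZB_def R_def by auto
    show False
    proof (rule scheme[OF Q'V PV _ Q'ne Pne])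
      show "Q' \<inter> P = {}" using PQ' by auto
      show "{b, a} \<notin> E" if "b \<in> Q'" "a \<in> P" for a b using noe'[OF that(2,1)] by (simp add: insert_commute)
      show "card Q' + card P = t" using sz' by simp
      show "t + card P \<le> card {r \<in> V - (Q' \<union> P). \<forall>a\<in>Q'. {r, a} \<in> E} + card Q' + 1" using h eq by simp
    qed
  qed
  ultimately show False using cardR sz' t1 by linarith
qed

end

theorem lemma2p3:
  fixes V :: "'a set" and E :: "'a set set" and t :: nat and A B :: "'a set"
  assumes "simple_graph V E"
    and "t \<ge> 1"
    and "card V = 4 * t - 1"
    and "indep_number V E = 2"
    and "cm E \<le> t - 1"
    and "A \<subseteq> V" and "B \<subseteq> V" and "A \<inter> B = {}"
    and "card A \<le> card B" and "card B = t - 1"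
  shows "\<exists>M. matching (between_edges E A B) M \<and> card M = card A"
proof -
  have fin: "finite V" and edge: "\<And>e. e \<in> E \<Longrightarrow> e \<subseteq> V \<and> card e = 2"
    using assms(1) unfolding simple_graph_def by auto
  have finE: "finite E"
  proof -
    have "E \<subseteq> Pow V" using edge by auto
    then show ?thesis using fin by (meson finite_Pow_iff finite_subset)
  qed
  have tri: "{x, y} \<in> E \<or> {x, z} \<in> E \<or> {y, z} \<in> E"
    if "x \<in> V" "y \<in> V" "z \<in> V" "x \<noteq> y" "x \<noteq> z" "y \<noteq> z" for x y z
  proof (rule ccontr)
    assume h: "\<not> ?thesis"
    define S where "S = {x, y, z}"
    have "indep_set V E S" unfolding indep_set_def
    proof (intro conjI ballI)
      show "S \<subseteq> V" using that unfolding S_def by auto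
    next
      fix u v assume u: "u \<in> S" and v: "v \<in> S"
      show "{u, v} \<notin> E"
      proof (cases "u = v")
        case True
        then show ?thesis using edge by fastforce
      next
        case False
        then show ?thesis using h u v unfolding S_def by (auto simp: insert_commute)
      qed
    qed
    moreover have "finite (card ` {S. indep_set V E S})"
    proof -
      have "{S. indep_set V E S} \<subseteq> Pow V" unfolding indep_set_def by auto
      then show ?thesis using fin by (meson finite_Pow_iff finite_subset finite_imageI)
    qed
    ultimately have "card S \<le> indep_number V E" unfolding indep_number_def by (simp add: Max_ge)
    moreover have "card S = 3" unfolding S_def using that by auto
    ultimately show False using assms(4) by simp
  qed
  have cmb: "card M \<le> t - 1" if "connected_matching E M" for M
  proof -
    have "finite (card ` {M. connected_matching E M})"
    proof -
      have "{M. connected_matching E M} \<subseteq> Pow E" unfolding connected_matching_def matching_def by auto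
      then show ?thesis using finE by (meson finite_Pow_iff finite_subset finite_imageI)
    qed
    then have "card M \<le> cm E" unfolding cm_def using that by (simp add: Max_ge)
    then show ?thesis using assms(5) by simp
  qed
  interpret gr V E t
    by unfold_locales (use fin edge assms(2,3) tri cmb in auto)
  have finA: "finite A" and finB: "finite B" using assms(6,7) fin finite_subset by blast+
  define N where "N = (\<lambda>a. {b \<in> B. {a, b} \<in> E})"
  have finN: "\<forall>a\<in>A. finite (N a)" unfolding N_def using finB by auto
  have hallc: "\<forall>T\<subseteq>A. card T \<le> card (\<Union>(N ` T))"
  proof (intro allI impI)
    fix T assume T: "T \<subseteq> A"
    show "card T \<le> card (\<Union>(N ` T))"
    proof (rule ccontr)
      assume lt: "\<not> ?thesis"
      define U where "U = \<Union>(N ` T)"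
      have UB: "U \<subseteq> B" unfolding U_def N_def by auto
      have cU: "card U \<le> t - 1" using card_mono[OF finB UB] assms(10) by simp
      have cBU: "card (B - U) = (t - 1) - card U" using UB finB assms(10) by (simp add: card_Diff_subset finite_subset)
      have cT: "card T \<le> t - 1" using card_mono[OF finA T] assms(9,10) by simp
      show False
      proof (rule two_cliques[of T "B - U"])
        show "T \<subseteq> V" using T assms(6) by auto
        show "B - U \<subseteq> V" using assms(7) by auto
        show "T \<inter> (B - U) = {}" using T assms(8) by auto
        show "T \<noteq> {}" using lt by auto
        show "{a, b} \<notin> E" if "a \<in> T" "b \<in> B - U" for a b
          using that unfolding U_def N_def by auto
        show "card T < t" using cT assms(2) by linarith
        show "t \<le> card T + card (B - U)" using lt cU cBU cT assms(2) unfolding U_def by linarith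
      qed
    qed
  qed
  obtain g where g: "inj_on g A" "\<forall>a\<in>A. g a \<in> N a"
    using hall[OF finA finN hallc] by blast
  have gB: "g a \<in> B" "{a, g a} \<in> E" if "a \<in> A" for a using g(2) that unfolding N_def by auto
  have disj: "g ` A \<inter> A = {}" using gB assms(8) by auto
  note pi = pair_image[OF g(1) disj]
  define M where "M = (\<lambda>a. {a, g a}) ` A"
  have "matching (between_edges E A B) M"
    unfolding matching_def
  proof (intro conjI ballI impI)
    show "M \<subseteq> between_edges E A B" unfolding M_def between_edges_def using gB by auto
  next
    fix e1 e2 assume "e1 \<in> M" "e2 \<in> M" "e1 \<noteq> e2"
    then obtain s1 s2 where "s1 \<in> A" "s2 \<in> A" "e1 = {s1, g s1}" "e2 = {s2, g s2}" "s1 \<noteq> s2"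
      unfolding M_def by auto
    then show "e1 \<inter> e2 = {}" using pi(2) by auto
  qed
  moreover have "card M = card A" unfolding M_def using pi(1) by (rule card_image)
  ultimately show ?thesis by blast
qed

end
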